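(* Let $R$ be a uniparameter QNA satisfying Hypothesis (H), with $C$ as in that hypothesis. For each $k\in[1,N]\setminus C$, the quantum torus $\mathcal Q_k$ generated by $\{y_i^{\pm1}: i\in[1,N]\setminus(C\cup\{k\})\}$ contains a non-trivial central monomial $\prod_{i\in[1,N]\setminus(C\cup\{k\})}y_i^{m_i}$, i.e. one with at least one $m_i\neq0$.
   Context: ${\mathbb K}$ is a field of characteristic $0$. A quantum nilpotent algebra (QNA) is an iterated Ore extension $R={\mathbb K}[x_1][x_2;\sigma_2,\delta_2]\cdots[x_N;\sigma_N,\delta_N]$, where $R_k={\mathbb K}[x_1][x_2;\sigma_2,\delta_2]\cdots[x_k;\sigma_k,\delta_k]$ ($R_0={\mathbb K}$), $\sigma_k$ is a ${\mathbb K}$-automorphism and $\delta_k$ a $\sigma_k$-derivation of $R_{k-1}$, together with a torus $\mathcal H$ acting rationally by ${\mathbb K}$-automorphisms on $R$ with each $x_i$ an $\mathcal H$-eigenvector, such that: (i) $\sigma_k(x_j)=\lambda_{kj}x_j$ for $j<k$, with $\lambda_{kj}\in{\mathbb K}^*$; (ii) $\delta_k$ is locally nilpotent on $R_{k-1}$; (iii) for each $k$ there exist $h_k\in\mathcal H$ and $q_k\in{\mathbb K}^*$ not a root of unity such that $h_k$ acts on $R_{k-1}$ as $\sigma_k$ and $h_k\cdot x_k=q_kx_k$. It is uniparameter if there are $q\in{\mathbb K}^*$ not a root of unity and a skew-symmetric integer matrix $(a_{ij})$ with $\lambda_{kj}=q^{a_{kj}}$ for all $j<k$. The rank is $n=|\{k:\delta_k=0\}|$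 and $\mathcal H=({\mathbb K}^* )^n$ is taken maximal. Homogeneous elements are the $\mathcal H$-eigenvectors. Goodearl–Yakimov elements: there is a surjective map $\mu:[1,N]\to[1,n]$ with predecessor $p(k)=\max\{j<k:\mu(j)=\mu(k)\}$ (or $-\infty$) and successor $s(k)=\min\{j>k:\mu(j)=\mu(k)\}$ (or $+\infty$), and homogeneous elements $y_1,\ldots,y_N\in R$, uniquely determined, with $y_k=x_k$ if $p(k)=-\infty$ and $y_k=y_{p(k)}x_k-c_k$ for some $c_k\in R_{k-1}$ otherwise, such that for every $k$ the set $\{y_j:j\le k,\ s(j)>k\}$ is, up to nonzero scalars, the set of homogeneous prime elements (nonzero normal elements $p$ with $pR$ completely prime) of $R_k$. They satisfy $y_jy_i=q_{ij}y_iy_j$ with $q_{ij}$ powers of $q$; $\mathcal A_{\mathbf q}\subseteq R$ is the quantum affine space they generate and $\mathcal T_{\mathbf q}=R[y_1^{-1},\ldots,y_N^{-1}]$ the associated quantum torus. Let $\mathfrak s_{+\infty}=\{k:s(k)=+\infty\}$. The center $\operatorname{Z}(\mathcal T_{\mathbf q})$ is a Laurent polynomial ring ${\mathbb K}[z_1^{\pm1},\ldots,z_\ell^{\pm1}]$ whose generators can be chosen to be Laurent monomials in the $y_j$, $j\in\mathfrak s_{+\infty}$; for such a monomial $z$, $\operatorname{supp}z$ is the set of $j\in\mathfrak s_{+\infty}$ whose exponent in $z$ is nonzero. Hypothesis (H): there exist such monomial generators $z_1,\ldots,z_\ell$ of $\operatorname{Z}(\mathcal T_{\mathbf q})$ and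 a subset $C=\{c_1,\ldots,c_\ell\}\subseteq\mathfrak s_{+\infty}$ with $|C|=\ell$ such that for all $i\in[1,\ell]$: (H1) $z_i\in\mathcal A_{\mathbf q}$; (H2) the exponent of $y_{c_j}$ in $z_i$ is $\delta_{ij}$ for all $j$; (H3) if $|\operatorname{supp}z_i|\ge2$ then $\operatorname{supp}z_i\setminus\{c_i\}\not\subseteq\bigcup_{j\neq i}\operatorname{supp}z_j$. *)

theory Defs
  imports Main
begin

text \<open>Quantum torus on generators y_1,...,y_N with y_j y_i = q^(b i j) y_i y_j.
  Exponent vectors are functions nat => int vanishing outside {1..N};
  an element is a finitely supported K-valued function on exponent vectors,
  the coefficient of the ordered monomial y_1^(m 1) ... y_N^(m N).\<close>

definition expv :: "nat \<Rightarrow> (nat \<Rightarrow> int) set" where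
  "expv N = {m. \<forall>i. i \<notin> {1..N} \<longrightarrow> m i = 0}"

text \<open>Ordered monomials multiply as y^m y^n = q^(qexp b N m n) y^(m+n).\<close>
definition qexp :: "(nat \<Rightarrow> nat \<Rightarrow> int) \<Rightarrow> nat \<Rightarrow> (nat \<Rightarrow> int) \<Rightarrow> (nat \<Rightarrow> int) \<Rightarrow> int" where
  "qexp b N m n = (\<Sum>i\<in>{1..N}. \<Sum>j\<in>{i<..N}. b i j * m j * n i)"

definition qtorus :: "nat \<Rightarrow> ((nat \<Rightarrow> int) \<Rightarrow> 'a::field) set" where
  "qtorus N = {f. finite {m. f m \<noteq> 0} \<and> {m. f m \<noteq> 0} \<subseteq> expv N}"

definition qmult :: "'a::field \<Rightarrow> (nat \<Rightarrow> nat \<Rightarrow> int) \<Rightarrow> nat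
    \<Rightarrow> ((nat \<Rightarrow> int) \<Rightarrow> 'a) \<Rightarrow> ((nat \<Rightarrow> int) \<Rightarrow> 'a) \<Rightarrow> ((nat \<Rightarrow> int) \<Rightarrow> 'a)" where
  "qmult q b N f g = (\<lambda>p. \<Sum>m\<in>{m. f m \<noteq> 0}.
      q powi (qexp b N m (\<lambda>i. p i - m i)) * f m * g (\<lambda>i. p i - m i))"

definition qmono :: "(nat \<Rightarrow> int) \<Rightarrow> ((nat \<Rightarrow> int) \<Rightarrow> 'a::field)" where
  "qmono m = (\<lambda>p. if p = m then 1 else 0)"

definition qsubtorus :: "nat \<Rightarrow> nat set \<Rightarrow> ((nat \<Rightarrow> int) \<Rightarrow> 'a::field) set" where
  "qsubtorus N S = {f \<in> qtorus N. \<forall>m. f m \<noteq> 0 \<longrightarrow> (\<forall>i. i \<notin> S \<longrightarrow> m i = 0)}"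

definition qcenter :: "'a::field \<Rightarrow> (nat \<Rightarrow> nat \<Rightarrow> int) \<Rightarrow> nat \<Rightarrow> ((nat \<Rightarrow> int) \<Rightarrow> 'a) set" where
  "qcenter q b N = {f \<in> qtorus N. \<forall>g \<in> qtorus N. qmult q b N f g = qmult q b N g f}"

text \<open>Exponent vector of z_1^(a 1) ... z_l^(a l) where z_i = y^(e i) (up to scalar).\<close>
definition lcomb :: "nat \<Rightarrow> (nat \<Rightarrow> nat \<Rightarrow> int) \<Rightarrow> (nat \<Rightarrow> int) \<Rightarrow> (nat \<Rightarrow> int)" where
  "lcomb l e a = (\<lambda>j. \<Sum>i\<in>{1..l}. a i * e i j)"

definition esupp :: "nat set \<Rightarrow> (nat \<Rightarrow> int) \<Rightarrow> nat set" where
  "esupp S m = {j \<in> S. m j \<noteq> 0}"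

end

theory Submission
  imports Defs "Jordan_Normal_Form.Determinant"
begin


lemma qmult_mono_left:
  "qmult q b N (qmono m) g = (\<lambda>p. q powi qexp b N m (\<lambda>i. p i - m i) * g (\<lambda>i. p i - m i))"
proof -
  have "{m'. (qmono m :: _ \<Rightarrow> 'a) m' \<noteq> 0} = {m}" by (auto simp: qmono_def)
  then show ?thesis unfolding qmult_def by (simp add: qmono_def)
qed

lemma qmult_mono_right:
  assumes fin: "finite {m. g m \<noteq> 0}"
  shows "qmult q b N g (qmono m) = (\<lambda>p. q powi qexp b N (\<lambda>i. p i - m i) m * g (\<lambda>i. p i - m i))"
proof
  fix p
  let ?x = "\<lambda>i. p i - m i"
  have eq: "\<And>m'. ((\<lambda>i. p i - m' i) = m) = (m' = ?x)"
  proof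
    fix m' assume h: "(\<lambda>i. p i - m' i) = m"
    show "m' = ?x"
    proof
      fix x show "m' x = p x - m x" using fun_cong[OF h, of x] by simp
    qed
  qed auto
  have "qmult q b N g (qmono m) p = (\<Sum>m'\<in>{m. g m \<noteq> 0}. if m' = ?x then q powi qexp b N m' (\<lambda>i. p i - m' i) * g m' else 0)"
    unfolding qmult_def qmono_def by (intro sum.cong) (auto simp: eq)
  also have "\<dots> = (if g ?x \<noteq> 0 then q powi qexp b N ?x (\<lambda>i. p i - ?x i) * g ?x else 0)"
    using fin by (simp add: sum.delta')
  also have "(\<lambda>i. p i - ?x i) = m" by auto
  finally show "qmult q b N g (qmono m) p = q powi qexp b N ?x m * g ?x" by auto
qed

lemma comm:
  assumes fin: "finite {m. g m \<noteq> 0}"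
    and h: "\<And>n. g n \<noteq> 0 \<Longrightarrow> qexp b N m n = qexp b N n m"
  shows "qmult q b N (qmono m) g = qmult q b N g (qmono m)"
  unfolding qmult_mono_left qmult_mono_right[OF fin]
proof
  fix p
  show "q powi qexp b N m (\<lambda>i. p i - m i) * g (\<lambda>i. p i - m i) =
        q powi qexp b N (\<lambda>i. p i - m i) m * g (\<lambda>i. p i - m i)"
    using h[of "\<lambda>i. p i - m i"] by (cases "g (\<lambda>i. p i - m i) = 0") auto
qed

lemma powi_inj:
  fixes q :: "'a::field"
  assumes "q \<noteq> 0" "\<forall>n::nat. n > 0 \<longrightarrow> q ^ n \<noteq> 1" "q powi x = q powi y"
  shows "x = y"
proof (rule ccontr)
  assume ne: "x \<noteq> y"
  have d: "q powi (x - y) = 1" using assms by (simp add: power_int_diff)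
  have d2: "q powi (y - x) = 1" using assms by (simp add: power_int_diff)
  show False
  proof (cases "x > y")
    case True
    then have "q ^ nat (x - y) = 1" using d True power_int_of_nat[of q "nat (x - y)"] by simp
    moreover have "nat (x - y) > 0" using True by simp
    ultimately show False using assms(2) by blast
  next
    case False
    then have "y > x" using ne by simp
    then have "q ^ nat (y - x) = 1" using d2 \<open>y > x\<close> power_int_of_nat[of q "nat (y - x)"] by simp
    moreover have "nat (y - x) > 0" using \<open>y > x\<close> by simp
    ultimately show False using assms(2) by blast
  qed
qed

definition Mx :: "(nat \<Rightarrow> nat \<Rightarrow> int) \<Rightarrow> nat \<Rightarrow> nat \<Rightarrow> int" where
  "Mx b i j = (if i < j then b i j else if j < i then - b j i else 0)"

lemma Mx_skew: "Mx b i j = - Mx b j i" by (auto simp: Mx_def)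

lemma om_sum:
  "qexp b N m n - qexp b N n m = (\<Sum>i\<in>{1..N}. \<Sum>j\<in>{1..N}. n i * Mx b i j * m j)"
proof -
  have r: "\<And>i f. (\<Sum>j\<in>{i<..N}. f j) = (\<Sum>j\<in>{1..N}. if i < j then f j else (0::int))"
  proof -
    fix i and f :: "nat \<Rightarrow> int"
    have "{i<..N} = {j\<in>{1..N}. i < j}" by auto
    then have "(\<Sum>j\<in>{i<..N}. f j) = (\<Sum>j\<in>{j\<in>{1..N}. i < j}. f j)" by simp
    also have "\<dots> = (\<Sum>j\<in>{1..N}. if i < j then f j else (0::int))"
      by (rule sum.inter_filter) simp
    finally show "(\<Sum>j\<in>{i<..N}. f j) = (\<Sum>j\<in>{1..N}. if i < j then f j else (0::int))" .
  qed
  have a: "qexp b N m n = (\<Sum>i\<in>{1..N}. \<Sum>j\<in>{1..N}. if i < j then n i * b i j * m j else 0)"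
    unfolding qexp_def r by (intro sum.cong refl; auto simp: algebra_simps)
  have "qexp b N n m = (\<Sum>i\<in>{1..N}. \<Sum>j\<in>{1..N}. if i < j then b i j * n j * m i else 0)"
    unfolding qexp_def r by (intro sum.cong refl; auto simp: algebra_simps)
  also have "\<dots> = (\<Sum>j\<in>{1..N}. \<Sum>i\<in>{1..N}. if i < j then b i j * n j * m i else 0)"
    by (rule sum.swap)
  also have "\<dots> = (\<Sum>i\<in>{1..N}. \<Sum>j\<in>{1..N}. if j < i then n i * b j i * m j else 0)"
    by (intro sum.cong refl; auto simp: algebra_simps)
  finally have b: "qexp b N n m = (\<Sum>i\<in>{1..N}. \<Sum>j\<in>{1..N}. if j < i then n i * b j i * m j else 0)" .
  have t: "\<And>i j. (if i < j then n i * b i j * m j else 0) - (if j < i then n i * b j i * m j else 0) = n i * Mx b i j * m j"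
    by (auto simp: Mx_def)
  have "qexp b N m n - qexp b N n m = (\<Sum>i\<in>{1..N}. (\<Sum>j\<in>{1..N}. if i < j then n i * b i j * m j else 0) - (\<Sum>j\<in>{1..N}. if j < i then n i * b j i * m j else 0))"
    unfolding a b by (rule sum_subtractf[symmetric])
  also have "\<dots> = (\<Sum>i\<in>{1..N}. \<Sum>j\<in>{1..N}. (if i < j then n i * b i j * m j else 0) - (if j < i then n i * b j i * m j else 0))"
    by (intro sum.cong refl) (rule sum_subtractf[symmetric])
  also have "\<dots> = (\<Sum>i\<in>{1..N}. \<Sum>j\<in>{1..N}. n i * Mx b i j * m j)"
    by (simp only: t)
  finally show ?thesis .
qed

lemma sum_restrict:
  assumes S: "S \<subseteq> {1..N}" and n: "\<forall>x. x \<notin> S \<longrightarrow> n x = 0" and m: "\<forall>x. x \<notin> S \<longrightarrow> m x = 0"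
  shows "(\<Sum>i\<in>{1..N}. \<Sum>j\<in>{1..N}. n i * Mx b i j * m j) = (\<Sum>i\<in>S. n i * (\<Sum>j\<in>S. Mx b i j * m j))"
proof -
  have "(\<Sum>i\<in>{1..N}. \<Sum>j\<in>{1..N}. n i * Mx b i j * m j) = (\<Sum>i\<in>{1..N}. n i * (\<Sum>j\<in>S. Mx b i j * m j))"
  proof (intro sum.cong refl)
    fix i
    have "(\<Sum>j\<in>{1..N}. n i * Mx b i j * m j) = (\<Sum>j\<in>S. n i * Mx b i j * m j)"
      using S m by (intro sum.mono_neutral_right) auto
    then show "(\<Sum>j\<in>{1..N}. n i * Mx b i j * m j) = n i * (\<Sum>j\<in>S. Mx b i j * m j)"
      by (simp add: sum_distrib_left mult.assoc)
  qed
  also have "\<dots> = (\<Sum>i\<in>S. n i * (\<Sum>j\<in>S. Mx b i j * m j))"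
    using S n by (intro sum.mono_neutral_right) auto
  finally show ?thesis .
qed


lemma K1:
  fixes M :: "nat \<Rightarrow> nat \<Rightarrow> int" and S :: "nat set"
  assumes fin: "finite S" and odd: "odd (card S)"
    and skew: "\<And>i j. M i j = - M j i"
  shows "\<exists>m. (\<forall>x. x \<notin> S \<longrightarrow> m x = 0) \<and> (\<exists>x\<in>S. m x \<noteq> 0) \<and>
            (\<forall>i\<in>S. (\<Sum>j\<in>S. M i j * m j) = 0)"
proof -
  let ?n = "card S"
  obtain f where f: "bij_betw f {0..<?n} S" using ex_bij_betw_nat_finite[OF fin] by blast
  define A where "A = mat ?n ?n (\<lambda>(a,c). M (f a) (f c))"
  have A: "A \<in> carrier_mat ?n ?n" unfolding A_def by simp
  have tr: "transpose_mat A = (-1) \<cdot>\<^sub>m A"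
  proof (rule eq_matI)
    fix i j assume "i < dim_row ((-1) \<cdot>\<^sub>m A)" "j < dim_col ((-1) \<cdot>\<^sub>m A)"
    then have ij: "i < ?n" "j < ?n" using A by auto
    have "M (f j) (f i) = - M (f i) (f j)" by (rule skew)
    then show "transpose_mat A $$ (i, j) = ((-1) \<cdot>\<^sub>m A) $$ (i, j)"
      unfolding A_def using ij by simp
  qed (use A in auto)
  have "det A = det (transpose_mat A)" using det_transpose[OF A] by simp
  also have "\<dots> = (-1) ^ ?n * det A" unfolding tr using A by simp
  also have "\<dots> = - det A" using odd by simp
  finally have "det A = 0" by simp
  then obtain v where v: "v \<in> carrier_vec ?n" "v \<noteq> 0\<^sub>v ?n" "A *\<^sub>v v = 0\<^sub>v ?n"
    using det_0_iff_vec_prod_zero[OF A] by blast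
  define g where "g = the_inv_into {0..<?n} f"
  have fg: "\<And>x. x \<in> S \<Longrightarrow> f (g x) = x \<and> g x < ?n"
    unfolding g_def using f
    by (metis atLeastLessThan_iff bij_betw_def f_the_inv_into_f the_inv_into_into subset_refl)
  have gf: "\<And>a. a < ?n \<Longrightarrow> g (f a) = a"
    unfolding g_def using f by (simp add: bij_betw_def the_inv_into_f_f)
  define m where "m x = (if x \<in> S then v $ g x else 0)" for x
  have mf: "\<And>a. a < ?n \<Longrightarrow> m (f a) = v $ a"
    unfolding m_def using f gf by (auto simp: bij_betw_def)
  have "\<exists>a<?n. v $ a \<noteq> 0"
    using v(1,2) by (metis carrier_vecD eq_vecI index_zero_vec(1,2))
  then obtain a where a: "a < ?n" "v $ a \<noteq> 0" by blast
  have ne: "\<exists>x\<in>S. m x \<noteq> 0"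
    using a mf f by (intro bexI[of _ "f a"]) (auto simp: bij_betw_def)
  have ker: "\<forall>i\<in>S. (\<Sum>j\<in>S. M i j * m j) = 0"
  proof
    fix i assume i: "i \<in> S"
    have "(\<Sum>j\<in>S. M i j * m j) = (\<Sum>c\<in>{0..<?n}. M i (f c) * m (f c))"
      using sum.reindex_bij_betw[OF f, of "\<lambda>j. M i j * m j"] by simp
    also have "\<dots> = (\<Sum>c\<in>{0..<?n}. M (f (g i)) (f c) * v $ c)"
      using fg[OF i] mf by (intro sum.cong) auto
    also have "\<dots> = (A *\<^sub>v v) $ g i"
      using fg[OF i] v(1) unfolding A_def
      by (auto simp: mult_mat_vec_def scalar_prod_def intro!: sum.cong)
    also have "\<dots> = 0" using v(3) fg[OF i] by simp
    finally show "(\<Sum>j\<in>S. M i j * m j) = 0" .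
  qed
  show ?thesis using ne ker by (intro exI[of _ m]) (auto simp: m_def)
qed

lemma qmono_qtorus: "m \<in> expv N \<Longrightarrow> (qmono m :: _ \<Rightarrow> 'a::field) \<in> qtorus N"
proof -
  assume m: "m \<in> expv N"
  have "{p. (qmono m :: _ \<Rightarrow> 'a) p \<noteq> 0} = {m}" by (auto simp: qmono_def)
  then show ?thesis using m unfolding qtorus_def by simp
qed

theorem lemma5p1:
  fixes q :: "'a::field_char_0" and b :: "nat \<Rightarrow> nat \<Rightarrow> int"
    and N l k :: nat and Sinf :: "nat set"
    and e :: "nat \<Rightarrow> nat \<Rightarrow> int" and c :: "nat \<Rightarrow> nat"
  assumes q_nz: "q \<noteq> 0"
    and q_not_root: "\<forall>n::nat. n > 0 \<longrightarrow> q ^ n \<noteq> 1"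
    and b_skew: "\<forall>i\<in>{1..N}. \<forall>j\<in>{1..N}. b i j = - b j i"
    and Sinf: "Sinf \<subseteq> {1..N}"
    and e_supp: "\<forall>i\<in>{1..l}. \<forall>j. j \<notin> Sinf \<longrightarrow> e i j = 0"
    and center: "qcenter q b N =
        {f \<in> qtorus N. \<forall>m. f m \<noteq> 0 \<longrightarrow> (\<exists>a. m = lcomb l e a)}"
    and laurent_indep: "inj_on (lcomb l e) {a. \<forall>i. i \<notin> {1..l} \<longrightarrow> a i = 0}"
    and C_sub: "c ` {1..l} \<subseteq> Sinf"
    and C_card: "card (c ` {1..l}) = l"
    and H1: "\<forall>i\<in>{1..l}. \<forall>j. e i j \<ge> 0"
    and H2: "\<forall>i\<in>{1..l}. \<forall>j\<in>{1..l}. e i (c j) = (if i = j then 1 else 0)"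
    and H3: "\<forall>i\<in>{1..l}. card (esupp Sinf (e i)) \<ge> 2 \<longrightarrow>
        \<not> (esupp Sinf (e i) - {c i} \<subseteq> (\<Union>j\<in>{1..l} - {i}. esupp Sinf (e j)))"
    and k: "k \<in> {1..N} - c ` {1..l}"
  shows "\<exists>m \<in> expv N. (\<forall>i\<in>c ` {1..l} \<union> {k}. m i = 0) \<and> m \<noteq> (\<lambda>_. 0) \<and>
     (\<forall>g \<in> qsubtorus N ({1..N} - (c ` {1..l} \<union> {k})).
        qmult q b N (qmono m) g = qmult q b N g (qmono m))"
  proof -
  define C where "C = c ` {1..l}"
  define U where "U = {1..N} - C"
  define T where "T = U - {k}"
  have CN: "C \<subseteq> {1..N}" using C_sub Sinf unfolding C_def by blast
  have UN: "U \<subseteq> {1..N}" unfolding U_def by blast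
  have TN: "T \<subseteq> {1..N}" unfolding T_def U_def by blast
  have finU: "finite U" unfolding U_def by simp
  have cardU: "card U = N - l"
    unfolding U_def using card_Diff_subset[OF finite_subset[OF CN] CN] C_card unfolding C_def by simp
  have kU: "k \<in> U" using k unfolding U_def C_def by simp
  have cardT: "card T = card U - 1" unfolding T_def using kU finU by simp
  have T_eq: "{1..N} - (c ` {1..l} \<union> {k}) = T" unfolding T_def U_def C_def by blast
  have eexp: "e t \<in> expv N" if t: "t \<in> {1..l}" for t
  proof -
    have "e t i = 0" if "i \<notin> {1..N}" for i
    proof -
      have "i \<notin> Sinf" using that Sinf by blast
      then show ?thesis using e_supp t by blast
    qed
    then show ?thesis unfolding expv_def by blast
  qed
  have ecent: "qexp b N (e t) n = qexp b N n (e t)" if t: "t \<in> {1..l}" and n: "n \<in> expv N" for t n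
  proof -
    have lc: "e t = lcomb l e (\<lambda>i. if i = t then 1 else 0)"
      unfolding lcomb_def
    proof (rule ext)
      fix j
      have "(\<Sum>i\<in>{1..l}. (if i = t then 1 else 0) * e i j) = (\<Sum>i\<in>{1..l}. if i = t then e i j else 0)"
        by (intro sum.cong) auto
      also have "\<dots> = e t j" using t by simp
      finally show "e t j = (\<Sum>i\<in>{1..l}. (if i = t then 1 else 0) * e i j)" by simp
    qed
    have "(qmono (e t) :: _ \<Rightarrow> 'a) \<in> qcenter q b N"
      unfolding center mem_Collect_eq
    proof (intro conjI allI impI)
      show "(qmono (e t) :: _ \<Rightarrow> 'a) \<in> qtorus N" by (rule qmono_qtorus[OF eexp[OF t]])
      fix m assume "(qmono (e t) :: _ \<Rightarrow> 'a) m \<noteq> 0"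
      then have "m = e t" by (simp add: qmono_def split: if_splits)
      then show "\<exists>a. m = lcomb l e a" using lc by blast
    qed
    then have "\<forall>g\<in>qtorus N. qmult q b N (qmono (e t)) g = qmult q b N g (qmono (e t))"
      unfolding qcenter_def mem_Collect_eq by (rule conjunct2)
    then have "qmult q b N (qmono (e t)) (qmono n) = qmult q b N (qmono n) (qmono (e t) :: _ \<Rightarrow> 'a)"
      using qmono_qtorus[OF n] by (rule bspec)
    from fun_cong[OF this, of "\<lambda>i. e t i + n i"]
    have "q powi qexp b N (e t) n = q powi qexp b N n (e t)"
      unfolding qmult_mono_left by (simp add: qmono_def)
    then show ?thesis by (rule powi_inj[OF q_nz q_not_root])
  qed
  have Mx_restrict: "(\<Sum>j\<in>{1..N}. Mx b i j * v j) = (\<Sum>j\<in>S. Mx b i j * v j)"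
    if "S \<subseteq> {1..N}" "\<forall>x. x \<notin> S \<longrightarrow> v x = 0" for S v i
    using that by (intro sum.mono_neutral_right) auto
  have central_zero: "\<forall>x. v x = 0"
    if v0: "\<forall>x. x \<notin> U \<longrightarrow> v x = 0" and vk: "\<forall>i\<in>U. (\<Sum>j\<in>U. Mx b i j * v j) = 0" for v
  proof -
    define L where "L i = (\<Sum>j\<in>{1..N}. Mx b i j * v j)" for i
    have vexp: "v \<in> expv N" using v0 UN unfolding expv_def by blast
    have LU: "L i = 0" if "i \<in> U" for i
      using vk that Mx_restrict[OF UN v0] unfolding L_def by simp
    have om: "qexp b N v n - qexp b N n v = (\<Sum>i\<in>{1..N}. n i * L i)" for n
      unfolding om_sum L_def by (simp add: sum_distrib_left mult.assoc)
    have LC: "L (c t) = 0" if t: "t \<in> {1..l}" for t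
    proof -
      have ctN: "c t \<in> {1..N}" using CN t unfolding C_def by blast
      have "0 = qexp b N v (e t) - qexp b N (e t) v" using ecent[OF t vexp] by simp
      also have "\<dots> = (\<Sum>i\<in>{1..N}. e t i * L i)" by (rule om)
      also have "\<dots> = e t (c t) * L (c t) + (\<Sum>i\<in>{1..N} - {c t}. e t i * L i)"
        using ctN by (simp add: sum.remove)
      also have "(\<Sum>i\<in>{1..N} - {c t}. e t i * L i) = 0"
      proof (intro sum.neutral ballI)
        fix i assume i: "i \<in> {1..N} - {c t}"
        show "e t i * L i = 0"
        proof (cases "i \<in> U")
          case True then show ?thesis using LU by simp
        next
          case False
          then obtain s where s: "s \<in> {1..l}" "i = c s" using i unfolding U_def C_def by blast
          then have "s \<noteq> t" using i by auto
          then show ?thesis using H2 s t by auto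
        qed
      qed
      finally show ?thesis using H2 t by simp
    qed
    have Lall: "L i = 0" if "i \<in> {1..N}" for i
      using that LU LC unfolding U_def C_def by blast
    have comm_all: "qexp b N v n = qexp b N n v" for n
      using om[of n] Lall by simp
    have "(qmono v :: _ \<Rightarrow> 'a) \<in> qcenter q b N"
      unfolding qcenter_def mem_Collect_eq
    proof (intro conjI ballI)
      show "(qmono v :: _ \<Rightarrow> 'a) \<in> qtorus N" by (rule qmono_qtorus[OF vexp])
      fix g :: "(nat \<Rightarrow> int) \<Rightarrow> 'a" assume g: "g \<in> qtorus N"
      show "qmult q b N (qmono v) g = qmult q b N g (qmono v)"
      proof (rule comm)
        show "finite {m. g m \<noteq> 0}" using g unfolding qtorus_def by simp
      qed (rule comm_all)
    qed
    then have "\<forall>m. (qmono v :: _ \<Rightarrow> 'a) m \<noteq> 0 \<longrightarrow> (\<exists>a. m = lcomb l e a)"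
      unfolding center mem_Collect_eq by (rule conjunct2)
    then have "(qmono v :: _ \<Rightarrow> 'a) v \<noteq> 0 \<longrightarrow> (\<exists>a. v = lcomb l e a)"
      by (rule spec)
    moreover have "(qmono v :: _ \<Rightarrow> 'a) v \<noteq> 0" by (simp add: qmono_def)
    ultimately obtain a where a: "v = lcomb l e a" by blast
    have a0: "a t = 0" if t: "t \<in> {1..l}" for t
    proof -
      have "c t \<notin> U" using t unfolding U_def C_def by blast
      then have "0 = v (c t)" using v0 by simp
      also have "\<dots> = (\<Sum>i\<in>{1..l}. a i * (if i = t then 1 else 0))"
        unfolding a lcomb_def using H2 t by (intro sum.cong) auto
      also have "\<dots> = (\<Sum>i\<in>{1..l}. if i = t then a i else 0)"
        by (intro sum.cong) auto
      also have "\<dots> = a t" using t by simp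
      finally show ?thesis by simp
    qed
    show ?thesis unfolding a lcomb_def using a0 by simp
  qed
  have sk: "\<And>i j. Mx b i j = - Mx b j i" by (rule Mx_skew)
  have evenU: "even (card U)"
  proof (rule ccontr)
    assume "\<not> even (card U)"
    then obtain v where v: "\<forall>x. x \<notin> U \<longrightarrow> v x = 0" "\<exists>x\<in>U. v x \<noteq> 0"
      "\<forall>i\<in>U. (\<Sum>j\<in>U. Mx b i j * v j) = 0"
      using K1[of U "Mx b", OF finU \<open>\<not> even (card U)\<close> sk] by blast
    then show False using central_zero[OF v(1) v(3)] by blast
  qed
  have oddT: "odd (card T)"
  proof -
    have "card U > 0" using kU finU card_gt_0_iff by blast
    then show ?thesis using evenU unfolding cardT by (cases "card U") auto
  qed
  have finT: "finite T" unfolding T_def using finU by simp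
  obtain m where m: "\<forall>x. x \<notin> T \<longrightarrow> m x = 0" "\<exists>x\<in>T. m x \<noteq> 0"
      "\<forall>i\<in>T. (\<Sum>j\<in>T. Mx b i j * m j) = 0"
    using K1[of T "Mx b", OF finT oddT sk] by blast
  show ?thesis
  proof (intro bexI conjI ballI)
    show "m \<in> expv N" using m(1) TN unfolding expv_def by blast
    show "m i = 0" if "i \<in> c ` {1..l} \<union> {k}" for i
      using m(1) that unfolding T_def U_def C_def by blast
    show "m \<noteq> (\<lambda>_. 0)" using m(2) by auto
    fix g :: "(nat \<Rightarrow> int) \<Rightarrow> 'a"
    assume g: "g \<in> qsubtorus N ({1..N} - (c ` {1..l} \<union> {k}))"
    then have g': "g \<in> qtorus N" "\<forall>n. g n \<noteq> 0 \<longrightarrow> (\<forall>i. i \<notin> T \<longrightarrow> n i = 0)"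
      unfolding qsubtorus_def T_eq by auto
    show "qmult q b N (qmono m) g = qmult q b N g (qmono m)"
    proof (rule comm)
      show "finite {m. g m \<noteq> 0}" using g' unfolding qtorus_def by blast
      fix n assume gn: "g n \<noteq> 0"
      have "qexp b N m n - qexp b N n m = (\<Sum>i\<in>T. n i * (\<Sum>j\<in>T. Mx b i j * m j))"
        unfolding om_sum using g'(2) gn m(1) TN by (intro sum_restrict) auto
      also have "\<dots> = 0" using m(3) by simp
      finally show "qexp b N m n = qexp b N n m" by simp
    qed
  qed
qed

end
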